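(* Let $n\ge2$, and let $g_1(s),\dots,g_n(s)$, $f(s)$ be rational proper transfer functions. Suppose each $g_i$ is output strictly passive, i.e. there is $\epsilon>0$ with $\mathrm{Re}(g_i(s))\ge\epsilon|g_i(s)|^2$ for all $\mathrm{Re}(s)>0$ and all $i$, and $f$ is positive real, i.e. $\mathrm{Re}(f(s))\ge0$ for all $\mathrm{Re}(s)>0$. Then there exists $\gamma>0$ such that for every positive semidefinite matrix $L$ (real symmetric $n\times n$), $$\|\bar g\|_{\mathcal{H}_\infty}\le\gamma\quad\text{and}\quad\|T\|_{\mathcal{H}_\infty}\le\gamma,$$ where $T(s)=(I_n+\mathrm{diag}\{g_i(s)\}f(s)L)^{-1}\mathrm{diag}\{g_i(s)\}$ and $\bar g(s)=\big(\frac1n\sum_{i=1}^n g_i^{-1}(s)\big)^{-1}$.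
   Context: $\|H\|_{\mathcal{H}_\infty}=\sup_{\mathrm{Re}(s)>0}\|H(s)\|$ with $\|\cdot\|$ the spectral norm. *)

theory Defs
  imports "HOL-Analysis.Analysis" "HOL-Computational_Algebra.Computational_Algebra"
begin

(* A (real-)rational transfer function, represented by numerator/denominator
   polynomials with real coefficients in lowest terms. *)
type_synonym tf = "real poly \<times> real poly"

definition tf_eval :: "tf \<Rightarrow> complex \<Rightarrow> complex" where
  "tf_eval G s = poly (map_poly complex_of_real (fst G)) s
                 / poly (map_poly complex_of_real (snd G)) s"

definition rational_proper :: "tf \<Rightarrow> bool" where
  "rational_proper G \<longleftrightarrow> snd G \<noteq> 0 \<and> coprime (fst G) (snd G)
      \<and> degree (fst G) \<le> degree (snd G)"

definition tf_defined_at :: "tf \<Rightarrow> complex \<Rightarrow> bool" where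
  "tf_defined_at G s \<longleftrightarrow> poly (map_poly complex_of_real (snd G)) s \<noteq> 0"

definition output_strictly_passive_with :: "real \<Rightarrow> tf \<Rightarrow> bool" where
  "output_strictly_passive_with eps G \<longleftrightarrow>
     (\<forall>s. 0 < Re s \<longrightarrow> tf_defined_at G s \<and>
          Re (tf_eval G s) \<ge> eps * (cmod (tf_eval G s))\<^sup>2)"

definition positive_real :: "tf \<Rightarrow> bool" where
  "positive_real G \<longleftrightarrow>
     (\<forall>s. 0 < Re s \<longrightarrow> tf_defined_at G s \<and> Re (tf_eval G s) \<ge> 0)"

definition spectral_norm :: "complex^'n^'m \<Rightarrow> real" where
  "spectral_norm A = onorm (\<lambda>x. A *v x)"

definition hinf_norm_mat :: "(complex \<Rightarrow> complex^'n^'m) \<Rightarrow> ereal" where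
  "hinf_norm_mat H = (SUP s\<in>{s. 0 < Re s}. ereal (spectral_norm (H s)))"

definition hinf_norm_scalar :: "(complex \<Rightarrow> complex) \<Rightarrow> ereal" where
  "hinf_norm_scalar h = (SUP s\<in>{s. 0 < Re s}. ereal (cmod (h s)))"

definition psd :: "real^'n^'n \<Rightarrow> bool" where
  "psd L \<longleftrightarrow> transpose L = L \<and> (\<forall>x. x \<bullet> (L *v x) \<ge> 0)"

definition cdiag :: "('n \<Rightarrow> complex) \<Rightarrow> complex^'n^'n" where
  "cdiag d = (\<chi> i j. if i = j then d i else 0)"

definition closed_loop_T :: "('n::finite \<Rightarrow> tf) \<Rightarrow> tf \<Rightarrow> real^'n^'n \<Rightarrow> complex \<Rightarrow> complex^'n^'n" where
  "closed_loop_T g f L s =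
     (let D = cdiag (\<lambda>i. tf_eval (g i) s);
          fL = (\<chi> i j. tf_eval f s * complex_of_real (L $ i $ j))
      in matrix_inv (mat 1 + D ** fL) ** D)"

definition gbar :: "('n::finite \<Rightarrow> tf) \<Rightarrow> complex \<Rightarrow> complex" where
  "gbar g s = inverse ((1 / of_nat CARD('n)) * (\<Sum>i\<in>UNIV. inverse (tf_eval (g i) s)))"

end

theory Submission
  imports Defs
begin


lemma psd_herm:
  fixes L :: "real^'n::finite^'n" and x :: "complex^'n"
  assumes "psd L"
  defines "B \<equiv> (\<Sum>i\<in>UNIV. cnj (x$i) * (\<Sum>j\<in>UNIV. of_real (L$i$j) * x$j))"
  shows "Im B = 0" "Re B \<ge> 0"
proof -
  have sym: "\<And>i j. L$i$j = L$j$i" using assms(1) unfolding psd_def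
    by (metis transpose_def vec_lambda_beta)
  define a where "a = (\<chi> i. Re (x$i))"
  define b where "b = (\<chi> i. Im (x$i))"
  have "Re B = (\<Sum>i\<in>UNIV. \<Sum>j\<in>UNIV. L$i$j * (Re (x$i) * Re (x$j) + Im (x$i) * Im (x$j)))"
    unfolding B_def by (simp add: sum_distrib_left algebra_simps)
  also have "\<dots> = a \<bullet> (L *v a) + b \<bullet> (L *v b)"
    by (simp add: a_def b_def inner_vec_def matrix_vector_mult_def sum_distrib_left
         sum.distrib[symmetric] algebra_simps)
  finally show "Re B \<ge> 0" using assms(1) unfolding psd_def
    by (metis add_nonneg_nonneg)
  have "Im B = (\<Sum>i\<in>UNIV. \<Sum>j\<in>UNIV. L$i$j * (Re (x$i) * Im (x$j)))
       - (\<Sum>i\<in>UNIV. \<Sum>j\<in>UNIV. L$i$j * (Im (x$i) * Re (x$j)))"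
    unfolding B_def by (simp add: sum_distrib_left algebra_simps sum_subtractf)
  also have "(\<Sum>i\<in>UNIV. \<Sum>j\<in>UNIV. L$i$j * (Im (x$i) * Re (x$j)))
        = (\<Sum>j\<in>UNIV. \<Sum>i\<in>UNIV. L$i$j * (Im (x$i) * Re (x$j)))"
    by (rule sum.swap)
  also have "\<dots> = (\<Sum>i\<in>UNIV. \<Sum>j\<in>UNIV. L$i$j * (Re (x$i) * Im (x$j)))"
    by (simp add: sym mult.commute)
  finally show "Im B = 0" by simp
qed

lemma key:
  fixes gv :: "'n::finite \<Rightarrow> complex" and fv :: complex and L :: "real^'n^'n" and x y :: "complex^'n"
  assumes eps: "eps > 0" and gp: "\<And>i. Re (gv i) \<ge> eps * (cmod (gv i))\<^sup>2" and fp: "Re fv \<ge> 0"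
    and L: "psd L"
    and eq: "(mat 1 + cdiag gv ** (\<chi> i j. fv * complex_of_real (L$i$j))) *v x = cdiag gv *v y"
  shows "eps * norm x \<le> norm y"
proof -
  define B where "B = (\<Sum>i\<in>UNIV. cnj (x$i) * (\<Sum>j\<in>UNIV. of_real (L$i$j) * x$j))"
  have B: "Im B = 0" "Re B \<ge> 0" using psd_herm[OF L, of x] unfolding B_def by auto
  have comp: "x$i + gv i * (fv * (\<Sum>j\<in>UNIV. of_real (L$i$j) * x$j)) = gv i * y$i" for i
  proof -
    define F where "F = (\<chi> i j. fv * complex_of_real (L$i$j))"
    have dv: "(cdiag gv *v v) $ k = gv k * v $ k" for v k
    proof -
      have "(cdiag gv *v v) $ k = (\<Sum>j\<in>UNIV. (if k = j then gv k * v$j else 0))"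
        unfolding matrix_vector_mult_def cdiag_def vec_lambda_beta by (rule sum.cong) auto
      also have "\<dots> = gv k * v $ k" by simp
      finally show ?thesis .
    qed
    have fx: "(F *v x) $ i = fv * (\<Sum>j\<in>UNIV. of_real (L$i$j) * x$j)"
      by (simp add: F_def matrix_vector_mult_def sum_distrib_left mult.assoc)
    have "(mat 1 + cdiag gv ** F) *v x = x + cdiag gv *v (F *v x)"
      by (simp add: matrix_vector_mult_add_rdistrib matrix_vector_mul_assoc)
    then have "x + cdiag gv *v (F *v x) = cdiag gv *v y" using eq F_def by simp
    then have "(x + cdiag gv *v (F *v x)) $ i = (cdiag gv *v y) $ i" by simp
    then show ?thesis by (simp add: dv fx)
  qed
  have per: "cnj (x$i) * x$i * inverse (gv i) + fv * (cnj (x$i) * (\<Sum>j\<in>UNIV. of_real (L$i$j) * x$j))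
       = cnj (x$i) * y$i" for i
  proof (cases "gv i = 0")
    case True
    then have "x$i = 0" using comp[of i] by simp
    then show ?thesis by simp
  next
    case False
    have "cnj (x$i) * inverse (gv i) * (x$i + gv i * (fv * (\<Sum>j\<in>UNIV. of_real (L$i$j) * x$j)))
        = cnj (x$i) * inverse (gv i) * (gv i * y$i)" using comp[of i] by simp
    then show ?thesis using False by (simp add: field_simps)
  qed
  have pert: "eps * (cmod (x$i))\<^sup>2 \<le> Re (cnj (x$i) * x$i * inverse (gv i))" for i
  proof (cases "gv i = 0")
    case True
    then have "x$i = 0" using comp[of i] by simp
    then show ?thesis by simp
  next
    case False
    have "cnj (x$i) * x$i = of_real ((cmod (x$i))\<^sup>2)" by (simp add: complex_mult_cnj mult.commute cmod_power2)
    then have e: "Re (cnj (x$i) * x$i * inverse (gv i)) = (cmod (x$i))\<^sup>2 * Re (inverse (gv i))"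
      by simp
    have "Re (inverse (gv i)) = Re (gv i) / (cmod (gv i))\<^sup>2"
      by (simp add: Re_divide inverse_eq_divide cmod_def)
    also have "\<dots> \<ge> eps" using gp[of i] False by (simp add: field_simps)
    finally have r: "eps \<le> Re (inverse (gv i))" .
    show ?thesis unfolding e by (metis r mult.commute mult_right_mono zero_le_power2)
  qed
  have sumeq: "(\<Sum>i\<in>UNIV. cnj (x$i) * x$i * inverse (gv i)) + fv * B = (\<Sum>i\<in>UNIV. cnj (x$i) * y$i)"
    unfolding B_def sum_distrib_left[of fv] sum.distrib[symmetric] using per by (intro sum.cong) auto
  have "eps * (norm x)\<^sup>2 = (\<Sum>i\<in>UNIV. eps * (cmod (x$i))\<^sup>2)"
    by (simp add: norm_vec_def L2_set_def sum_distrib_left sum_nonneg)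
  also have "\<dots> \<le> Re (\<Sum>i\<in>UNIV. cnj (x$i) * x$i * inverse (gv i))"
    unfolding Re_sum by (rule sum_mono[OF pert])
  also have "\<dots> \<le> Re (\<Sum>i\<in>UNIV. cnj (x$i) * x$i * inverse (gv i)) + Re (fv * B)"
    using B fp by simp
  also have "\<dots> = Re (\<Sum>i\<in>UNIV. cnj (x$i) * y$i)" using arg_cong[OF sumeq, of Re] by simp
  also have "\<dots> = x \<bullet> y" by (simp add: inner_vec_def Re_sum inner_complex_def)
  also have "\<dots> \<le> norm x * norm y" by (rule norm_cauchy_schwarz)
  finally have h: "eps * (norm x)\<^sup>2 \<le> norm x * norm y" .
  show ?thesis
  proof (cases "norm x = 0")
    case True then show ?thesis by simp
  next
    case False
    then have "norm x > 0" by simp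
    with h show ?thesis by (simp add: power2_eq_square)
  qed
qed

lemma gbar_bound:
  fixes g :: "'n::finite \<Rightarrow> tf"
  assumes eps: "eps > 0" and gp: "\<And>i. Re (tf_eval (g i) s) \<ge> eps * (cmod (tf_eval (g i) s))\<^sup>2"
  shows "cmod (gbar g s) \<le> real CARD('n) / eps"
proof -
  define z where "z i = tf_eval (g i) s" for i
  define S where "S = (\<Sum>i\<in>UNIV. inverse (z i))"
  have ri: "Re (inverse (z i)) \<ge> (if z i = 0 then 0 else eps)" for i
  proof (cases "z i = 0")
    case False
    have "Re (inverse (z i)) = Re (z i) / (cmod (z i))\<^sup>2"
      by (simp add: Re_divide inverse_eq_divide cmod_def)
    also have "\<dots> \<ge> eps" using gp[of i] False by (simp add: field_simps z_def)
    finally show ?thesis using False by simp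
  qed simp
  have n: "real CARD('n) > 0" by simp
  show ?thesis
  proof (cases "S = 0")
    case True
    then show ?thesis unfolding gbar_def using eps
      by (simp add: S_def[symmetric, unfolded z_def])
  next
    case False
    then obtain k where k: "z k \<noteq> 0" unfolding S_def by (metis (no_types, lifting) inverse_zero sum.neutral)
    have "Re S = (\<Sum>i\<in>UNIV. Re (inverse (z i)))" by (simp add: S_def Re_sum)
    also have "\<dots> \<ge> (\<Sum>i\<in>UNIV. (if z i = 0 then 0 else eps))" by (rule sum_mono[OF ri])
    finally have "Re S \<ge> (\<Sum>i\<in>UNIV. (if z i = 0 then 0 else eps))" .
    moreover have "(\<Sum>i\<in>UNIV. (if z i = 0 then 0 else eps)) \<ge> (if z k = 0 then 0 else eps)"
      by (rule member_le_sum) (use eps in auto)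
    ultimately have ReS: "Re S \<ge> eps" using k by simp
    have cS: "cmod S \<ge> eps" using ReS complex_Re_le_cmod order_trans by blast
    have "gbar g s = of_real (real CARD('n)) / S"
      unfolding gbar_def S_def z_def using n by (simp add: field_simps)
    then have "cmod (gbar g s) = real CARD('n) / cmod S" by (simp add: norm_divide)
    also have "\<dots> \<le> real CARD('n) / eps" using cS eps n by (simp add: frac_le)
    finally show ?thesis .
  qed
qed

lemma T_bound:
  fixes g :: "'n::finite \<Rightarrow> tf" and L :: "real^'n^'n"
  assumes eps: "eps > 0" and gp: "\<And>i. Re (tf_eval (g i) s) \<ge> eps * (cmod (tf_eval (g i) s))\<^sup>2"
    and fp: "Re (tf_eval f s) \<ge> 0" and L: "psd L"
  shows "spectral_norm (closed_loop_T g f L s) \<le> 1 / eps"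
proof -
  define D where "D = cdiag (\<lambda>i. tf_eval (g i) s)"
  define F where "F = (\<chi> i j. tf_eval f s * complex_of_real (L $ i $ j))"
  define M where "M = mat 1 + D ** F"
  have T: "closed_loop_T g f L s = matrix_inv M ** D"
    unfolding closed_loop_T_def M_def D_def F_def Let_def ..
  have K: "M *v x = D *v y \<Longrightarrow> eps * norm x \<le> norm y" for x y
    using key[of eps "\<lambda>i. tf_eval (g i) s", OF eps gp fp L] unfolding M_def D_def F_def by blast
  have "\<forall>x. M *v x = 0 \<longrightarrow> x = 0"
  proof (intro allI impI)
    fix x assume "M *v x = 0"
    then have "M *v x = D *v 0" by simp
    from K[OF this] eps have "norm x \<le> 0" by (simp add: mult_le_0_iff)
    then show "x = 0" by simp
  qed
  then have "\<exists>B. B ** M = mat 1" by (simp add: matrix_left_invertible_ker)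
  then have "invertible M" by (simp add: invertible_left_inverse)
  then have MI: "M ** matrix_inv M = mat 1"
    unfolding invertible_def matrix_inv_def by (rule someI_ex[THEN conjunct1])
  have "norm (closed_loop_T g f L s *v y) \<le> (1/eps) * norm y" for y
  proof -
    have MD: "M ** (matrix_inv M ** D) = D" by (metis matrix_mul_assoc MI matrix_mul_lid)
    have "M *v (closed_loop_T g f L s *v y) = (M ** (matrix_inv M ** D)) *v y"
      unfolding T by (simp add: matrix_vector_mul_assoc)
    also have "\<dots> = D *v y" by (simp only: MD)
    finally have "M *v (closed_loop_T g f L s *v y) = D *v y" .
    from K[OF this] eps show ?thesis by (simp add: field_simps)
  qed
  then show ?thesis unfolding spectral_norm_def by (rule onorm_le)
qed


theorem theorem4:
  fixes g :: "'n::finite \<Rightarrow> tf" and f :: tf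
  assumes "CARD('n) \<ge> 2"
    and "\<And>i. rational_proper (g i)"
    and "rational_proper f"
    and "\<exists>eps>0. \<forall>i. output_strictly_passive_with eps (g i)"
    and "positive_real f"
  shows "\<exists>\<gamma>>0. \<forall>L :: real^'n^'n. psd L \<longrightarrow>
           hinf_norm_scalar (gbar g) \<le> ereal \<gamma> \<and>
           hinf_norm_mat (closed_loop_T g f L) \<le> ereal \<gamma>"
proof -
  obtain eps where eps: "eps > 0" and osp: "\<And>i. output_strictly_passive_with eps (g i)"
    using assms(4) by blast
  have gp: "\<And>i. Re (tf_eval (g i) s) \<ge> eps * (cmod (tf_eval (g i) s))\<^sup>2" if "0 < Re s" for s
    using osp that unfolding output_strictly_passive_with_def by blast
  have fp: "Re (tf_eval f s) \<ge> 0" if "0 < Re s" for s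
    using assms(5) that unfolding positive_real_def by blast
  define \<gamma> where "\<gamma> = real CARD('n) / eps"
  have n1: "real CARD('n) \<ge> 1" by simp
  have g1: "1 / eps \<le> \<gamma>" unfolding \<gamma>_def using eps n1 by (simp add: divide_right_mono)
  have gpos: "\<gamma> > 0" unfolding \<gamma>_def using eps by simp
  show ?thesis
  proof (intro exI[of _ \<gamma>] conjI allI impI gpos)
    fix L :: "real^'n^'n" assume L: "psd L"
    show "hinf_norm_scalar (gbar g) \<le> ereal \<gamma>"
      unfolding hinf_norm_scalar_def
    proof (rule SUP_least)
      fix s assume "s \<in> {s. 0 < Re s}"
      then have "cmod (gbar g s) \<le> \<gamma>" unfolding \<gamma>_def using gbar_bound[OF eps gp] by auto
      then show "ereal (cmod (gbar g s)) \<le> ereal \<gamma>" by simp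
    qed
    show "hinf_norm_mat (closed_loop_T g f L) \<le> ereal \<gamma>"
      unfolding hinf_norm_mat_def
    proof (rule SUP_least)
      fix s assume "s \<in> {s. 0 < Re s}"
      then have "spectral_norm (closed_loop_T g f L s) \<le> 1 / eps"
        using T_bound[OF eps gp fp L] by auto
      then have "spectral_norm (closed_loop_T g f L s) \<le> \<gamma>" using g1 by linarith
      then show "ereal (spectral_norm (closed_loop_T g f L s)) \<le> ereal \<gamma>" by simp
    qed
  qed
qed

end
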